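(* Let $\lambda>0$ and let $\mu(t)$ solve $\dot\mu=-\mu\,(\mathcal K_\mu+\lambda I)^{-1}\mathcal K_\mu\frac{\delta F}{\delta\mu}[\mu]$. Then for every $0\le s\le1$, $$\frac{d}{dt}F(\mu(t))\le-\Big\|\frac{\delta F}{\delta\mu}[\mu_t]\Big\|^2_{L^2_{\mu_t}}+\lambda^s\Big\|(\mathcal K_{\mu_t}+\lambda I)^{-s/2}\frac{\delta F}{\delta\mu}[\mu_t]\Big\|^2_{L^2_{\mu_t}}.$$
   Context: $k$: symmetric positive definite bounded kernel; $\mathcal K_\mu f(x)=\int k(x,x')f(x')d\mu(x')$ is a compact positive self-adjoint operator on $L^2_\mu$ with spectral decomposition (eigenvalues $\sigma_j\ge0$, orthonormal eigenbasis $e_j$), and powers are defined spectrally. $\frac{\delta F}{\delta\mu}$: first variation, assumed in $L^2_\mu$; $\frac{d}{dt}F(\mu(t))=\int\frac{\delta F}{\delta\mu}d\dot\mu$. *)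

theory Defs
  imports "HOL-Analysis.Analysis"
begin

definition L2 :: "'a measure \<Rightarrow> ('a \<Rightarrow> real) \<Rightarrow> bool" where
  "L2 \<mu> f \<longleftrightarrow> f \<in> borel_measurable \<mu> \<and> integrable \<mu> (\<lambda>x. (f x)\<^sup>2)"

definition L2ip :: "'a measure \<Rightarrow> ('a \<Rightarrow> real) \<Rightarrow> ('a \<Rightarrow> real) \<Rightarrow> real" where
  "L2ip \<mu> f g = (\<integral>x. f x * g x \<partial>\<mu>)"

definition L2norm2 :: "'a measure \<Rightarrow> ('a \<Rightarrow> real) \<Rightarrow> real" where
  "L2norm2 \<mu> f = (\<integral>x. (f x)\<^sup>2 \<partial>\<mu>)"

definition Kop :: "('a \<Rightarrow> 'a \<Rightarrow> real) \<Rightarrow> 'a measure \<Rightarrow> ('a \<Rightarrow> real) \<Rightarrow> 'a \<Rightarrow> real" where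
  "Kop k \<mu> f x = (\<integral>y. k x y * f y \<partial>\<mu>)"

definition spd_bounded_kernel :: "'a measure \<Rightarrow> ('a \<Rightarrow> 'a \<Rightarrow> real) \<Rightarrow> bool" where
  "spd_bounded_kernel M k \<longleftrightarrow>
     (\<forall>x y. k x y = k y x) \<and>
     (\<forall>S c. finite S \<longrightarrow> (\<Sum>x\<in>S. \<Sum>y\<in>S. c x * c y * k x y) \<ge> 0) \<and>
     (\<exists>B. \<forall>x y. \<bar>k x y\<bar> \<le> B) \<and>
     (\<lambda>(x, y). k x y) \<in> borel_measurable (M \<Otimes>\<^sub>M M)"

definition L2_expansion :: "'a measure \<Rightarrow> 'b set \<Rightarrow> ('b \<Rightarrow> real) \<Rightarrow> ('b \<Rightarrow> 'a \<Rightarrow> real)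
    \<Rightarrow> ('a \<Rightarrow> real) \<Rightarrow> bool" where
  "L2_expansion \<mu> J c e h \<longleftrightarrow>
     ((\<lambda>F. \<integral>x. (h x - (\<Sum>j\<in>F. c j * e j x))\<^sup>2 \<partial>\<mu>) \<longlongrightarrow> 0) (finite_subsets_at_top J)"

definition eigen_ONB :: "('a \<Rightarrow> 'a \<Rightarrow> real) \<Rightarrow> 'a measure \<Rightarrow> 'b set \<Rightarrow> ('b \<Rightarrow> 'a \<Rightarrow> real)
    \<Rightarrow> ('b \<Rightarrow> real) \<Rightarrow> bool" where
  "eigen_ONB k \<mu> J e \<sigma> \<longleftrightarrow>
     (\<forall>j\<in>J. L2 \<mu> (e j)) \<and>
     (\<forall>i\<in>J. \<forall>j\<in>J. L2ip \<mu> (e i) (e j) = (if i = j then 1 else 0)) \<and>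
     (\<forall>f. L2 \<mu> f \<longrightarrow> L2_expansion \<mu> J (\<lambda>j. L2ip \<mu> f (e j)) e f) \<and>
     (\<forall>j\<in>J. \<sigma> j \<ge> 0 \<and> (AE x in \<mu>. Kop k \<mu> (e j) x = \<sigma> j * e j x))"

text \<open>Spectral functional calculus: h = phi(K_mu) f, i.e.
  h = sum_j phi(sigma_j) <f, e_j> e_j in L2 of mu.\<close>
definition spec_fun :: "'a measure \<Rightarrow> 'b set \<Rightarrow> ('b \<Rightarrow> 'a \<Rightarrow> real) \<Rightarrow> ('b \<Rightarrow> real)
    \<Rightarrow> (real \<Rightarrow> real) \<Rightarrow> ('a \<Rightarrow> real) \<Rightarrow> ('a \<Rightarrow> real) \<Rightarrow> bool" where
  "spec_fun \<mu> J e \<sigma> \<phi> f h \<longleftrightarrow>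
     L2 \<mu> h \<and> L2_expansion \<mu> J (\<lambda>j. \<phi> (\<sigma> j) * L2ip \<mu> f (e j)) e h"

end

theory Submission
  imports Defs
begin

lemma absprod: "\<bar>(a::real) * b\<bar> \<le> a\<^sup>2 + b\<^sup>2"
proof -
  have "0 \<le> (\<bar>a\<bar> - \<bar>b\<bar>)\<^sup>2" by simp
  then have "2 * (\<bar>a\<bar> * \<bar>b\<bar>) \<le> \<bar>a\<bar>\<^sup>2 + \<bar>b\<bar>\<^sup>2" by (simp add: power2_eq_square algebra_simps)
  moreover have "0 \<le> \<bar>a\<bar> * \<bar>b\<bar>" by simp
  ultimately show ?thesis unfolding abs_mult power2_abs by linarith
qed

lemma L2_int_mult:
  assumes "L2 N f" "L2 N g" shows "integrable N (\<lambda>x. f x * g x)"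
proof -
  have I: "integrable N (\<lambda>x. (f x)\<^sup>2 + (g x)\<^sup>2)" using assms unfolding L2_def by auto
  have M: "(\<lambda>x. f x * g x) \<in> borel_measurable N" using assms unfolding L2_def by auto
  have "AE x in N. norm (f x * g x) \<le> norm ((f x)\<^sup>2 + (g x)\<^sup>2)"
  proof (rule AE_I2)
    fix x
    have "\<bar>f x * g x\<bar> \<le> (f x)\<^sup>2 + (g x)\<^sup>2"
      by (rule absprod)
    then show "norm (f x * g x) \<le> norm ((f x)\<^sup>2 + (g x)\<^sup>2)" by simp
  qed
  then show ?thesis using Bochner_Integration.integrable_bound[OF I M] by blast
qed

lemma L2_add: assumes "L2 N f" "L2 N g" shows "L2 N (\<lambda>x. f x + g x)"
proof -
  have "integrable N (\<lambda>x. (f x)\<^sup>2 + (g x)\<^sup>2 + 2 * (f x * g x))"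
    using assms L2_int_mult[OF assms] unfolding L2_def by auto
  moreover have "(\<lambda>x. (f x + g x)\<^sup>2) = (\<lambda>x. (f x)\<^sup>2 + (g x)\<^sup>2 + 2 * (f x * g x))"
    by (auto simp: power2_eq_square algebra_simps)
  ultimately show ?thesis using assms unfolding L2_def by auto
qed

lemma L2_scale: assumes "L2 N f" shows "L2 N (\<lambda>x. c * f x)"
proof -
  have "(\<lambda>x. (c * f x)\<^sup>2) = (\<lambda>x. c\<^sup>2 * (f x)\<^sup>2)" by (auto simp: power_mult_distrib)
  then show ?thesis using assms unfolding L2_def by auto
qed

lemma L2_zero: "L2 N (\<lambda>x. 0)" unfolding L2_def by simp

lemma L2_sum: assumes "finite F" "\<And>j. j \<in> F \<Longrightarrow> L2 N (u j)"
  shows "L2 N (\<lambda>x. \<Sum>j\<in>F. u j x)"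
  using assms
proof (induction F rule: finite_induct)
  case empty then show ?case by (simp add: L2_zero)
next
  case (insert a F) then show ?case by (simp add: L2_add)
qed

lemma quad_CS:
  fixes A B C :: real
  assumes "\<And>t. t\<^sup>2 * A - 2 * t * C + B \<ge> 0" "A \<ge> 0" shows "C\<^sup>2 \<le> A * B"
proof (cases "A = 0")
  case True
  have "C = 0"
  proof (rule ccontr)
    assume "C \<noteq> 0"
    have "((\<bar>B\<bar>+1)/(2*C))\<^sup>2 * A - 2 * ((\<bar>B\<bar>+1)/(2*C)) * C + B \<ge> 0" by (rule assms)
    moreover have "2 * ((\<bar>B\<bar>+1)/(2*C)) * C = \<bar>B\<bar>+1" using \<open>C \<noteq> 0\<close> by simp
    moreover have "((\<bar>B\<bar>+1)/(2*C))\<^sup>2 * A = 0" using True by simp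
    moreover have "B \<le> \<bar>B\<bar>" by simp
    ultimately show False by linarith
  qed
  then show ?thesis using True by simp
next
  case False
  then have Ap: "A > 0" using assms(2) by simp
  have "(C/A)\<^sup>2 * A - 2 * (C/A) * C + B \<ge> 0" by (rule assms)
  then have "B - C\<^sup>2 / A \<ge> 0" using Ap by (simp add: field_simps power2_eq_square)
  then show ?thesis using Ap by (simp add: field_simps)
qed

lemma L2_CS:
  assumes f: "L2 N f" and g: "L2 N g"
  shows "(\<integral>x. f x * g x \<partial>N)\<^sup>2 \<le> (\<integral>x. (f x)\<^sup>2 \<partial>N) * (\<integral>x. (g x)\<^sup>2 \<partial>N)"
proof (rule quad_CS)
  have If: "integrable N (\<lambda>x. (f x)\<^sup>2)" and Ig: "integrable N (\<lambda>x. (g x)\<^sup>2)"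
    using f g unfolding L2_def by auto
  have Ifg: "integrable N (\<lambda>x. f x * g x)" by (rule L2_int_mult[OF f g])
  fix t :: real
  have "(\<lambda>x. (t * f x - g x)\<^sup>2) = (\<lambda>x. t\<^sup>2 * (f x)\<^sup>2 - 2 * t * (f x * g x) + (g x)\<^sup>2)"
    by (auto simp: power2_eq_square algebra_simps)
  then have "(\<integral>x. (t * f x - g x)\<^sup>2 \<partial>N) = (\<integral>x. t\<^sup>2 * (f x)\<^sup>2 - 2 * t * (f x * g x) + (g x)\<^sup>2 \<partial>N)"
    by simp
  also have "\<dots> = t\<^sup>2 * (\<integral>x. (f x)\<^sup>2 \<partial>N) - 2 * t * (\<integral>x. f x * g x \<partial>N) + (\<integral>x. (g x)\<^sup>2 \<partial>N)"
    using If Ig Ifg by simp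
  finally have "t\<^sup>2 * (\<integral>x. (f x)\<^sup>2 \<partial>N) - 2 * t * (\<integral>x. f x * g x \<partial>N) + (\<integral>x. (g x)\<^sup>2 \<partial>N)
      = (\<integral>x. (t * f x - g x)\<^sup>2 \<partial>N)" by simp
  moreover have "(\<integral>x. (t * f x - g x)\<^sup>2 \<partial>N) \<ge> 0" by simp
  ultimately show "t\<^sup>2 * (\<integral>x. (f x)\<^sup>2 \<partial>N) - 2 * t * (\<integral>x. f x * g x \<partial>N) + (\<integral>x. (g x)\<^sup>2 \<partial>N) \<ge> 0"
    by simp
next
  show "(\<integral>x. (f x)\<^sup>2 \<partial>N) \<ge> 0" by simp
qed

lemma exp_sum:
  assumes eL2: "\<And>j. j \<in> J \<Longrightarrow> L2 N (e j)" and f: "L2 N f" and g: "L2 N g"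
    and ex: "L2_expansion N J a e f"
  shows "((\<lambda>j. a j * L2ip N g (e j)) has_sum L2ip N g f) J"
  unfolding has_sum_def
proof -
  define E where "E = (\<lambda>F. \<integral>x. (f x - (\<Sum>j\<in>F. a j * e j x))\<^sup>2 \<partial>N)"
  define A where "A = (\<integral>x. (g x)\<^sup>2 \<partial>N)"
  have E0: "(E \<longlongrightarrow> 0) (finite_subsets_at_top J)" using ex unfolding L2_expansion_def E_def .
  have key: "\<bar>L2ip N g f - (\<Sum>j\<in>F. a j * L2ip N g (e j))\<bar> \<le> sqrt (A * E F)"
    if F: "finite F" "F \<subseteq> J" for F
  proof -
    have eF: "\<And>j. j \<in> F \<Longrightarrow> L2 N (e j)" using F eL2 by auto
    have Lu: "L2 N (\<lambda>x. \<Sum>j\<in>F. a j * e j x)"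
      by (rule L2_sum[OF F(1)]) (rule L2_scale[OF eF])
    have Ld: "L2 N (\<lambda>x. f x - (\<Sum>j\<in>F. a j * e j x))"
      using L2_add[OF f L2_scale[OF Lu, of "-1"]] by simp
    have "(\<Sum>j\<in>F. a j * L2ip N g (e j)) = (\<Sum>j\<in>F. \<integral>x. g x * (a j * e j x) \<partial>N)"
      unfolding L2ip_def by (simp add: mult.left_commute)
    also have "\<dots> = (\<integral>x. (\<Sum>j\<in>F. g x * (a j * e j x)) \<partial>N)"
      by (rule Bochner_Integration.integral_sum[symmetric]) (rule L2_int_mult[OF g L2_scale[OF eF]])
    also have "\<dots> = (\<integral>x. g x * (\<Sum>j\<in>F. a j * e j x) \<partial>N)"
      by (simp add: sum_distrib_left)
    finally have S: "(\<Sum>j\<in>F. a j * L2ip N g (e j)) = (\<integral>x. g x * (\<Sum>j\<in>F. a j * e j x) \<partial>N)" .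
    have "L2ip N g f - (\<Sum>j\<in>F. a j * L2ip N g (e j))
        = (\<integral>x. g x * (f x - (\<Sum>j\<in>F. a j * e j x)) \<partial>N)"
      unfolding S unfolding L2ip_def
      using L2_int_mult[OF g f] L2_int_mult[OF g Lu] by (simp add: right_diff_distrib)
    moreover have "(\<integral>x. g x * (f x - (\<Sum>j\<in>F. a j * e j x)) \<partial>N)\<^sup>2 \<le> A * E F"
      unfolding A_def E_def by (rule L2_CS[OF g Ld])
    ultimately have "(L2ip N g f - (\<Sum>j\<in>F. a j * L2ip N g (e j)))\<^sup>2 \<le> A * E F" by simp
    then have "sqrt ((L2ip N g f - (\<Sum>j\<in>F. a j * L2ip N g (e j)))\<^sup>2) \<le> sqrt (A * E F)"
      by (rule real_sqrt_le_mono)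
    then show ?thesis by simp
  qed
  have "((\<lambda>F. sqrt (A * E F)) \<longlongrightarrow> sqrt (A * 0)) (finite_subsets_at_top J)"
    by (intro tendsto_intros E0)
  then have lim0: "((\<lambda>F. sqrt (A * E F)) \<longlongrightarrow> 0) (finite_subsets_at_top J)" by simp
  have "((\<lambda>F. \<bar>L2ip N g f - (\<Sum>j\<in>F. a j * L2ip N g (e j))\<bar>) \<longlongrightarrow> 0) (finite_subsets_at_top J)"
  proof (rule tendsto_sandwich[OF _ _ tendsto_const lim0])
    show "\<forall>\<^sub>F F in finite_subsets_at_top J. 0 \<le> \<bar>L2ip N g f - (\<Sum>j\<in>F. a j * L2ip N g (e j))\<bar>" by simp
    show "\<forall>\<^sub>F F in finite_subsets_at_top J. \<bar>L2ip N g f - (\<Sum>j\<in>F. a j * L2ip N g (e j))\<bar> \<le> sqrt (A * E F)"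
      by (rule eventually_finite_subsets_at_top_weakI) (rule key)
  qed
  then have "((\<lambda>F. L2ip N g f - (\<Sum>j\<in>F. a j * L2ip N g (e j))) \<longlongrightarrow> 0) (finite_subsets_at_top J)"
    by (simp add: tendsto_rabs_zero_iff)
  then have "((\<lambda>F. L2ip N g f - (L2ip N g f - (\<Sum>j\<in>F. a j * L2ip N g (e j)))) \<longlongrightarrow> L2ip N g f - 0) (finite_subsets_at_top J)"
    by (intro tendsto_intros)
  then show "(sum (\<lambda>j. a j * L2ip N g (e j)) \<longlongrightarrow> L2ip N g f) (finite_subsets_at_top J)" by simp
qed

lemma coef_eq:
  assumes eL2: "\<And>j. j \<in> J \<Longrightarrow> L2 N (e j)"
    and ON: "\<forall>i\<in>J. \<forall>j\<in>J. L2ip N (e i) (e j) = (if i = j then 1 else 0)"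
    and f: "L2 N f" and ex: "L2_expansion N J a e f" and i: "i \<in> J"
  shows "L2ip N f (e i) = a i"
proof -
  have 1: "((\<lambda>j. a j * L2ip N (e i) (e j)) has_sum L2ip N (e i) f) J"
    by (rule exp_sum[OF eL2 f eL2[OF i] ex])
  have "((\<lambda>j. a j * L2ip N (e i) (e j)) has_sum (\<Sum>j\<in>{i}. a j * L2ip N (e i) (e j))) {i}"
    by (rule has_sum_finite) simp
  then have "((\<lambda>j. a j * L2ip N (e i) (e j)) has_sum a i) {i}" using ON i by simp
  then have 2: "((\<lambda>j. a j * L2ip N (e i) (e j)) has_sum a i) J"
    by (subst has_sum_cong_neutral[where T="{i}" and g="\<lambda>j. a j * L2ip N (e i) (e j)"])
       (use ON i in auto)
  have "L2ip N (e i) f = a i" using has_sum_unique[OF 1 2] .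
  then show ?thesis unfolding L2ip_def by (simp add: mult.commute)
qed

lemma Kop_sym:
  assumes fin: "finite_measure N" and sN: "sets N = sets M"
    and kernel: "spd_bounded_kernel M k"
    and g: "L2 N g" and e: "L2 N e"
    and ev: "AE x in N. Kop k N e x = c * e x"
  shows "L2ip N (Kop k N g) e = c * L2ip N g e"
proof -
  interpret finite_measure N by (rule fin)
  interpret P: pair_sigma_finite N N
    by (simp add: pair_sigma_finite_def sigma_finite_measure_axioms)
  obtain B where B: "\<And>x y. \<bar>k x y\<bar> \<le> B" using kernel unfolding spd_bounded_kernel_def by blast
  have ksym: "\<And>x y. k x y = k y x" using kernel unfolding spd_bounded_kernel_def by blast
  have B0: "0 \<le> B" using B[of undefined undefined] by simp
  have km0: "(\<lambda>(x, y). k x y) \<in> borel_measurable (M \<Otimes>\<^sub>M M)"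
    using kernel unfolding spd_bounded_kernel_def by blast
  have "sets (N \<Otimes>\<^sub>M N) = sets (M \<Otimes>\<^sub>M M)" using sN by (rule sets_pair_measure_cong) (rule sN)
  then have km[measurable]: "(\<lambda>(x, y). k x y) \<in> borel_measurable (N \<Otimes>\<^sub>M N)"
    using km0 measurable_cong_sets by blast
  have gm[measurable]: "g \<in> borel_measurable N" and em[measurable]: "e \<in> borel_measurable N"
    using g e unfolding L2_def by auto
  have gi: "integrable N g" using g unfolding L2_def by (auto intro: square_integrable_imp_integrable)
  have ei: "integrable N e" using e unfolding L2_def by (auto intro: square_integrable_imp_integrable)
  have km2: "(\<lambda>p. k (fst p) (snd p)) \<in> borel_measurable (N \<Otimes>\<^sub>M N)"
    using km by (simp add: case_prod_beta')
  define H where "H = (\<lambda>x y. k x y * g y * e x)"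
  have Hm: "case_prod H \<in> borel_measurable (N \<Otimes>\<^sub>M N)"
    unfolding H_def case_prod_beta' by measurable
  have Pint: "integrable (N \<Otimes>\<^sub>M N) (\<lambda>p. B * \<bar>e (fst p)\<bar> * \<bar>g (snd p)\<bar>)"
  proof (rule P.Fubini_integrable)
    show "(\<lambda>p. B * \<bar>e (fst p)\<bar> * \<bar>g (snd p)\<bar>) \<in> borel_measurable (N \<Otimes>\<^sub>M N)" by measurable
    have "(\<lambda>x. \<integral>y. norm (B * \<bar>e (fst (x, y))\<bar> * \<bar>g (snd (x, y))\<bar>) \<partial>N)
        = (\<lambda>x. (B * \<bar>e x\<bar>) * (\<integral>y. \<bar>g y\<bar> \<partial>N))"
      using B0 by (simp add: abs_mult)
    moreover have "integrable N (\<lambda>x. (B * \<bar>e x\<bar>) * (\<integral>y. \<bar>g y\<bar> \<partial>N))"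
      using ei by auto
    ultimately show "integrable N (\<lambda>x. \<integral>y. norm (B * \<bar>e (fst (x, y))\<bar> * \<bar>g (snd (x, y))\<bar>) \<partial>N)"
      by simp
    show "AE x in N. integrable N (\<lambda>y. B * \<bar>e (fst (x, y))\<bar> * \<bar>g (snd (x, y))\<bar>)"
      using gi by auto
  qed
  have Hint: "integrable (N \<Otimes>\<^sub>M N) (case_prod H)"
  proof (rule Bochner_Integration.integrable_bound[OF Pint Hm])
    show "AE p in N \<Otimes>\<^sub>M N. norm (case_prod H p) \<le> norm (B * \<bar>e (fst p)\<bar> * \<bar>g (snd p)\<bar>)"
    proof (rule AE_I2)
      fix p :: "'a \<times> 'a"
      obtain x y where p: "p = (x, y)" by (cases p)
      have "\<bar>k x y\<bar> * (\<bar>g y\<bar> * \<bar>e x\<bar>) \<le> B * (\<bar>g y\<bar> * \<bar>e x\<bar>)"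
        by (rule mult_right_mono[OF B]) simp
      then show "norm (case_prod H p) \<le> norm (B * \<bar>e (fst p)\<bar> * \<bar>g (snd p)\<bar>)"
        unfolding p H_def using B0 by (simp add: abs_mult mult_ac)
    qed
  qed
  have Hy: "(\<integral>x. H x y \<partial>N) = g y * Kop k N e y" for y
  proof -
    have "(\<lambda>x. H x y) = (\<lambda>x. g y * (k y x * e x))" by (auto simp: H_def ksym[of _ y])
    then show ?thesis unfolding Kop_def by simp
  qed
  have "L2ip N (Kop k N g) e = (\<integral>x. (\<integral>y. H x y \<partial>N) \<partial>N)"
    unfolding L2ip_def Kop_def H_def by simp
  also have "\<dots> = (\<integral>y. (\<integral>x. H x y \<partial>N) \<partial>N)"
    by (rule P.Fubini_integral[OF Hint, symmetric])
  also have "\<dots> = (\<integral>y. g y * Kop k N e y \<partial>N)"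
    by (simp add: Hy)
  also have "\<dots> = (\<integral>y. g y * (c * e y) \<partial>N)"
  proof (rule integral_cong_AE)
    have "integrable N (\<lambda>y. \<integral>x. H x y \<partial>N)" by (rule P.integrable_snd[OF Hint])
    moreover have "(\<lambda>y. \<integral>x. H x y \<partial>N) = (\<lambda>y. g y * Kop k N e y)"
      by (simp add: Hy)
    ultimately show "(\<lambda>y. g y * Kop k N e y) \<in> borel_measurable N" by auto
    show "(\<lambda>y. g y * (c * e y)) \<in> borel_measurable N" by measurable
    show "AE y in N. g y * Kop k N e y = g y * (c * e y)" using ev by auto
  qed
  also have "\<dots> = c * L2ip N g e" unfolding L2ip_def by (simp add: mult_ac)
  finally show ?thesis .
qed

lemma term_ineq:
  fixes sg lam s c :: real
  assumes sg: "sg \<ge> 0" and lam: "lam > 0" and s0: "0 \<le> s" and s1: "s \<le> 1"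
  shows "c * c \<le> (1 / (sg + lam) * (sg * c)) * c
     + lam powr s * (((sg + lam) powr (- s / 2) * c) * ((sg + lam) powr (- s / 2) * c))"
proof -
  define x where "x = sg + lam"
  have x0: "x > 0" using sg lam unfolding x_def by simp
  define r where "r = lam / x"
  have r0: "r > 0" using lam x0 unfolding r_def by simp
  have r1: "r \<le> 1" using sg lam x0 unfolding r_def x_def by simp
  have "r \<le> r powr s" using r0 r1 s1 using powr_mono' by force
  moreover have "r powr s = lam powr s * x powr (-s)"
    unfolding r_def using x0 lam by (simp add: divide_powr_uminus powr_divide)
  moreover have xx: "(x powr (-s/2)) * (x powr (-s/2)) = x powr (-s)"
    using x0 by (metis field_sum_of_halves powr_add)
  ultimately have R: "lam / x \<le> lam powr s * ((x powr (-s/2)) * (x powr (-s/2)))"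
    unfolding r_def by simp
  have one: "sg / x + lam / x = 1" using x0 unfolding x_def by (simp add: add_divide_distrib[symmetric])
  have "c * c = (sg / x + lam / x) * (c * c)" by (simp add: one)
  also have "\<dots> = (sg / x) * (c * c) + (lam / x) * (c * c)" by (simp add: distrib_right)
  finally have "c * c = (sg / x) * (c * c) + (lam / x) * (c * c)" .
  also have "\<dots> \<le> (sg / x) * (c * c) + (lam powr s * ((x powr (-s/2)) * (x powr (-s/2)))) * (c * c)"
    by (intro add_left_mono mult_right_mono R) simp
  finally show ?thesis unfolding x_def[symmetric] by (simp add: mult_ac)
qed

theorem mainTheorem18:
  fixes M :: "'a measure" and \<mu> :: "real \<Rightarrow> 'a measure" and k :: "'a \<Rightarrow> 'a \<Rightarrow> real"
    and F :: "'a measure \<Rightarrow> real" and dF :: "'a measure \<Rightarrow> 'a \<Rightarrow> real"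
    and lam :: real and T :: "real set"
    and J :: "real \<Rightarrow> 'b set" and e :: "real \<Rightarrow> 'b \<Rightarrow> 'a \<Rightarrow> real" and \<sigma> :: "real \<Rightarrow> 'b \<Rightarrow> real"
    and v :: "real \<Rightarrow> 'a \<Rightarrow> real"
  assumes lam_pos: "lam > 0"
    and T_open: "open T"
    and kernel: "spd_bounded_kernel M k"
    and meas: "\<And>t. t \<in> T \<Longrightarrow> sets (\<mu> t) = sets M \<and> finite_measure (\<mu> t)"
    and eig: "\<And>t. t \<in> T \<Longrightarrow> eigen_ONB k (\<mu> t) (J t) (e t) (\<sigma> t)"
    and dF_L2: "\<And>t. t \<in> T \<Longrightarrow> L2 (\<mu> t) (dF (\<mu> t))"
    and chain_rule: "\<And>t w. t \<in> T \<Longrightarrow> L2 (\<mu> t) w \<Longrightarrow>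
       (\<forall>A\<in>sets M. ((\<lambda>\<tau>. measure (\<mu> \<tau>) A) has_real_derivative
           (\<integral>x. indicator A x * w x \<partial>\<mu> t)) (at t)) \<Longrightarrow>
       ((\<lambda>\<tau>. F (\<mu> \<tau>)) has_real_derivative (\<integral>x. dF (\<mu> t) x * w x \<partial>\<mu> t)) (at t)"
    and v_def: "\<And>t. t \<in> T \<Longrightarrow>
       spec_fun (\<mu> t) (J t) (e t) (\<sigma> t) (\<lambda>r. 1 / (r + lam)) (Kop k (\<mu> t) (dF (\<mu> t))) (v t)"
    and flow: "\<And>t A. t \<in> T \<Longrightarrow> A \<in> sets M \<Longrightarrow>
       ((\<lambda>\<tau>. measure (\<mu> \<tau>) A) has_real_derivative
           (\<integral>x. indicator A x * (- v t x) \<partial>\<mu> t)) (at t)"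
  shows "\<forall>t\<in>T. \<forall>s\<in>{0..1}. \<forall>h.
     spec_fun (\<mu> t) (J t) (e t) (\<sigma> t) (\<lambda>r. (r + lam) powr (- s / 2)) (dF (\<mu> t)) h \<longrightarrow>
     deriv (\<lambda>\<tau>. F (\<mu> \<tau>)) t
       \<le> - L2norm2 (\<mu> t) (dF (\<mu> t)) + lam powr s * L2norm2 (\<mu> t) h"
proof (intro ballI allI impI)
  fix t s h
  assume t: "t \<in> T" and s: "s \<in> {0..1}"
    and hs: "spec_fun (\<mu> t) (J t) (e t) (\<sigma> t) (\<lambda>r. (r + lam) powr (- s / 2)) (dF (\<mu> t)) h"
  define N where "N = \<mu> t"
  define g where "g = dF N"
  define E where "E = e t"
  define I where "I = J t"
  define c where "c = (\<lambda>j. L2ip N g (E j))"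
  have sN: "sets N = sets M" and finN: "finite_measure N" using meas[OF t] unfolding N_def by auto
  have gL: "L2 N g" using dF_L2[OF t] unfolding g_def N_def .
  have EI: "eigen_ONB k N I E (\<sigma> t)" using eig[OF t] unfolding N_def I_def E_def .
  have eL2: "\<And>j. j \<in> I \<Longrightarrow> L2 N (E j)" using EI unfolding eigen_ONB_def by auto
  have ON: "\<forall>i\<in>I. \<forall>j\<in>I. L2ip N (E i) (E j) = (if i = j then 1 else 0)"
    using EI unfolding eigen_ONB_def by auto
  have expall: "\<And>f. L2 N f \<Longrightarrow> L2_expansion N I (\<lambda>j. L2ip N f (E j)) E f"
    using EI unfolding eigen_ONB_def by auto
  have evs: "\<And>j. j \<in> I \<Longrightarrow> \<sigma> t j \<ge> 0 \<and> (AE x in N. Kop k N (E j) x = \<sigma> t j * E j x)"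
    using EI unfolding eigen_ONB_def by auto
  have P1: "((\<lambda>j. c j * c j) has_sum L2norm2 N g) I"
  proof -
    have "((\<lambda>j. c j * L2ip N g (E j)) has_sum L2ip N g g) I"
      unfolding c_def by (rule exp_sum[OF eL2 gL gL expall[OF gL]])
    moreover have "L2ip N g g = L2norm2 N g" unfolding L2ip_def L2norm2_def by (simp add: power2_eq_square)
    ultimately show ?thesis unfolding c_def by simp
  qed
  have vs: "spec_fun N I E (\<sigma> t) (\<lambda>r. 1 / (r + lam)) (Kop k N g) (v t)"
    using v_def[OF t] unfolding N_def I_def E_def g_def .
  have vL: "L2 N (v t)" using vs unfolding spec_fun_def by auto
  have vex: "L2_expansion N I (\<lambda>j. 1 / (\<sigma> t j + lam) * L2ip N (Kop k N g) (E j)) E (v t)"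
    using vs unfolding spec_fun_def by simp
  have P2: "((\<lambda>j. (1 / (\<sigma> t j + lam) * (\<sigma> t j * c j)) * c j) has_sum L2ip N g (v t)) I"
  proof -
    have A: "((\<lambda>j. (1 / (\<sigma> t j + lam) * L2ip N (Kop k N g) (E j)) * c j) has_sum L2ip N g (v t)) I"
      unfolding c_def by (rule exp_sum[OF eL2 vL gL vex])
    have B: "\<And>j. j \<in> I \<Longrightarrow> L2ip N (Kop k N g) (E j) = \<sigma> t j * c j"
      unfolding c_def using Kop_sym[OF finN sN kernel gL eL2] evs by blast
    show ?thesis using A
      by (subst has_sum_cong[where g="\<lambda>j. (1 / (\<sigma> t j + lam) * L2ip N (Kop k N g) (E j)) * c j"]) (auto simp: B)
  qed
  define b where "b = (\<lambda>j. (\<sigma> t j + lam) powr (- s / 2) * c j)"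
  have hs': "spec_fun N I E (\<sigma> t) (\<lambda>r. (r + lam) powr (- s / 2)) g h"
    using hs unfolding N_def I_def E_def g_def .
  have hL: "L2 N h" using hs' unfolding spec_fun_def by auto
  have hex: "L2_expansion N I b E h" using hs' unfolding spec_fun_def b_def c_def by auto
  have P3: "((\<lambda>j. b j * b j) has_sum L2norm2 N h) I"
  proof -
    have "((\<lambda>j. b j * L2ip N h (E j)) has_sum L2ip N h h) I"
      by (rule exp_sum[OF eL2 hL hL hex])
    moreover have "\<And>j. j \<in> I \<Longrightarrow> L2ip N h (E j) = b j" by (rule coef_eq[OF eL2 ON hL hex])
    moreover have "L2ip N h h = L2norm2 N h" unfolding L2ip_def L2norm2_def by (simp add: power2_eq_square)
    ultimately show ?thesis
      by (subst has_sum_cong[where g="\<lambda>j. b j * L2ip N h (E j)"]) auto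
  qed
  have wL: "L2 N (\<lambda>x. - v t x)" using L2_scale[OF vL, of "-1"] by simp
  have D: "((\<lambda>\<tau>. F (\<mu> \<tau>)) has_real_derivative (\<integral>x. g x * (- v t x) \<partial>N)) (at t)"
    using chain_rule[OF t wL[unfolded N_def]] flow[OF t] unfolding g_def N_def by blast
  have dv: "deriv (\<lambda>\<tau>. F (\<mu> \<tau>)) t = - L2ip N g (v t)"
    using DERIV_imp_deriv[OF D] unfolding L2ip_def by simp
  have P4: "((\<lambda>j. (1 / (\<sigma> t j + lam) * (\<sigma> t j * c j)) * c j + lam powr s * (b j * b j))
      has_sum (L2ip N g (v t) + lam powr s * L2norm2 N h)) I"
    by (intro has_sum_add P2 has_sum_cmult_right P3)
  have "L2norm2 N g \<le> L2ip N g (v t) + lam powr s * L2norm2 N h"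
  proof (rule has_sum_mono[OF P1 P4])
    fix j assume j: "j \<in> I"
    show "c j * c j \<le> (1 / (\<sigma> t j + lam) * (\<sigma> t j * c j)) * c j + lam powr s * (b j * b j)"
      unfolding b_def using term_ineq[of "\<sigma> t j" lam s "c j"] evs[OF j] lam_pos s by auto
  qed
  then show "deriv (\<lambda>\<tau>. F (\<mu> \<tau>)) t \<le> - L2norm2 (\<mu> t) (dF (\<mu> t)) + lam powr s * L2norm2 (\<mu> t) h"
    unfolding dv using N_def g_def by simp
qed

end
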